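(* Let $n\ge 2$, $2\le r\le n$, $\lambda\ge1$ and $1\le k\le n-1$ be integers, and let $\mathcal{B}=\{B_1,\dots,B_{N^*}\}$ be a balanced incomplete block design $S_\lambda(2,r,n)$ on $I_n=\{1,\dots,n\}$ (blocks are $r$-element subsets of $I_n$, and every 2-element subset of $I_n$ is contained in exactly $\lambda$ blocks; $N^*=\lambda n(n-1)/(r(r-1))$). For $A\subseteq I_n$ with $|A|=n-k$ put $T(A)=\sum_{B\in\mathcal{B}:\,|B\cap A|\ge 2}(|B\cap A|-1)$ and $T=\max_{A\subseteq I_n,\,|A|=n-k}T(A)$. If $q$ is a prime power with $q>\binom{n}{k}TM$, where $M=\frac{\lambda n(n-1)}{r}-T$, then there exists a linear $(n,k,d)=(n,k,n-1)$ exact-repair regenerating code over $\mathbb{F}_q$ with $$\alpha=\frac{\lambda(n-1)}{r-1},\qquad \beta=\lambda,\qquad M=\frac{\lambda n(n-1)}{r}-T,$$ which has uncoded repair: when a node fails, each of the $n-1$ remaining nodes sends exactly $\lambda$ of its stored symbols, unchanged.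
   Context: A linear $(n,k,d)$ exact-repair regenerating code over $\mathbb{F}_q$ with parameters $(\alpha,\beta,M)$ stores on each of $n$ nodes $\alpha$ symbols of $\mathbb{F}_q$, each a linear function of a message in $\mathbb{F}_q^M$, such that (i) the message can be recovered from the contents of any $k$ nodes, and (ii) for any node $j$ and any set $A$ of $d$ other nodes, each node in $A$ sends $\beta$ symbols computed from its own content, and from the $d\beta$ received symbols the exact content of node $j$ can be reconstructed. *)

theory Defs
  imports Complex_Main
begin

text \<open>Balanced incomplete block design S_lambda(2,r,n) on {1..n}; the blocks form a
  list (a family, repetitions allowed).\<close>
definition bibd :: "nat \<Rightarrow> nat \<Rightarrow> nat \<Rightarrow> nat set list \<Rightarrow> bool" where
  "bibd lam r n Bs \<longleftrightarrow>
     (\<forall>B\<in>set Bs. B \<subseteq> {1..n} \<and> card B = r) \<and>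
     (\<forall>x\<in>{1..n}. \<forall>y\<in>{1..n}. x \<noteq> y \<longrightarrow>
        length (filter (\<lambda>B. x \<in> B \<and> y \<in> B) Bs) = lam)"

definition T_of :: "nat set list \<Rightarrow> nat set \<Rightarrow> nat" where
  "T_of Bs A = sum_list (map (\<lambda>B. card (B \<inter> A) - 1) (filter (\<lambda>B. card (B \<inter> A) \<ge> 2) Bs))"

definition T_max :: "nat \<Rightarrow> nat \<Rightarrow> nat set list \<Rightarrow> nat" where
  "T_max n k Bs = Max {T_of Bs A | A. A \<subseteq> {1..n} \<and> card A = n - k}"

text \<open>Linear code: node i (in {1..n}) stores alpha symbols; symbol t of node i is the
  linear form sum_{m<M} G i t m * x m of the message x (only x 0..x (M-1) matter).\<close>
definition content :: "nat \<Rightarrow> (nat \<Rightarrow> nat \<Rightarrow> nat \<Rightarrow> 'a::field) \<Rightarrow> nat \<Rightarrow> (nat \<Rightarrow> 'a) \<Rightarrow> nat \<Rightarrow> 'a" where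
  "content M G i x t = (\<Sum>m<M. G i t m * x m)"

text \<open>(n,k,d) exact-repair linear regenerating code with parameters (alpha,beta,M):
  (i) any k nodes determine the message; (ii) for any node j and any d other nodes A,
  each node of A sends beta linear combinations of its content, and these d*beta
  symbols determine the content of node j.\<close>
definition lin_regen_code ::
  "nat \<Rightarrow> nat \<Rightarrow> nat \<Rightarrow> nat \<Rightarrow> nat \<Rightarrow> nat \<Rightarrow> (nat \<Rightarrow> nat \<Rightarrow> nat \<Rightarrow> 'a::field) \<Rightarrow> bool" where
  "lin_regen_code n k d \<alpha> \<beta> M G \<longleftrightarrow>
     (\<forall>K. K \<subseteq> {1..n} \<and> card K = k \<longrightarrow>
        (\<forall>x y. (\<forall>i\<in>K. \<forall>t<\<alpha>. content M G i x t = content M G i y t) \<longrightarrow> (\<forall>m<M. x m = y m))) \<and>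
     (\<forall>j\<in>{1..n}. \<forall>A. A \<subseteq> {1..n} - {j} \<and> card A = d \<longrightarrow>
        (\<exists>H :: nat \<Rightarrow> nat \<Rightarrow> nat \<Rightarrow> 'a.
          \<forall>x y. (\<forall>i\<in>A. \<forall>l<\<beta>. (\<Sum>t<\<alpha>. H i l t * content M G i x t) = (\<Sum>t<\<alpha>. H i l t * content M G i y t))
               \<longrightarrow> (\<forall>t<\<alpha>. content M G j x t = content M G j y t)))"

definition uncoded_repair ::
  "nat \<Rightarrow> nat \<Rightarrow> nat \<Rightarrow> nat \<Rightarrow> (nat \<Rightarrow> nat \<Rightarrow> nat \<Rightarrow> 'a::field) \<Rightarrow> bool" where
  "uncoded_repair n \<alpha> \<beta> M G \<longleftrightarrow>
     (\<forall>j\<in>{1..n}. \<exists>S :: nat \<Rightarrow> nat set.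
        (\<forall>i\<in>{1..n} - {j}. S i \<subseteq> {..<\<alpha>} \<and> card (S i) = \<beta>) \<and>
        (\<forall>x y. (\<forall>i\<in>{1..n} - {j}. \<forall>t\<in>S i. content M G i x t = content M G i y t)
               \<longrightarrow> (\<forall>t<\<alpha>. content M G j x t = content M G j y t)))"

end

theory Submission imports Defs "HOL-Library.FuncSet" begin

definition V0 :: "'i set \<Rightarrow> ('i \<Rightarrow> 'a::zero) set" where
  "V0 I = {f. \<forall>z. z \<notin> I \<longrightarrow> f z = 0}"

lemma card_V0:
  assumes "finite I"
  shows "card (V0 I :: ('i \<Rightarrow> 'a::{finite,zero}) set) = card (UNIV :: 'a set) ^ card I"
proof -
  have "bij_betw (\<lambda>f. restrict f I) (V0 I :: ('i \<Rightarrow> 'a) set) (I \<rightarrow>\<^sub>E (UNIV::'a set))"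
  proof (rule bij_betw_byWitness[where f' = "\<lambda>g z. if z \<in> I then g z else 0"])
    show "\<forall>a\<in>V0 I. (\<lambda>z. if z \<in> I then restrict a I z else 0) = a"
      by (auto simp: V0_def fun_eq_iff)
    show "\<forall>a'\<in>I \<rightarrow>\<^sub>E UNIV. restrict (\<lambda>z. if z \<in> I then a' z else 0) I = a'"
      by (auto simp: fun_eq_iff PiE_def extensional_def)
    show "(\<lambda>f. restrict f I) ` V0 I \<subseteq> I \<rightarrow>\<^sub>E UNIV" by auto
    show "(\<lambda>g z. if z \<in> I then g z else 0) ` (I \<rightarrow>\<^sub>E UNIV) \<subseteq> V0 I"
      by (auto simp: V0_def)
  qed
  hence "card (V0 I :: ('i \<Rightarrow> 'a) set) = card (I \<rightarrow>\<^sub>E (UNIV::'a set))"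
    by (rule bij_betw_same_card)
  also have "\<dots> = card (UNIV :: 'a set) ^ card I" by (rule card_funcsetE[OF assms])
  finally show ?thesis .
qed

lemma greedy:
  fixes I :: "'i set" and UU :: "('i \<Rightarrow> 'a::{finite,field}) set set"
  assumes fin: "finite I" and finU: "finite UU" and cU: "card UU < card (UNIV :: 'a set)"
    and Ub: "\<And>U. U \<in> UU \<Longrightarrow> card U \<le> card (UNIV :: 'a set) ^ T"
    and Uf: "\<And>U. U \<in> UU \<Longrightarrow> finite U"
    and Us: "\<And>U u c. U \<in> UU \<Longrightarrow> u \<in> U \<Longrightarrow> (\<lambda>z. c * u z) \<in> U"
  shows "M + T \<le> card I \<Longrightarrow> \<exists>w. (\<forall>m<M. w m \<in> V0 I) \<and>
     (\<forall>U\<in>UU. \<forall>c. (\<lambda>z. \<Sum>m<M. c m * w m z) \<in> U \<longrightarrow> (\<forall>m<M. c m = 0))"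
proof (induction M)
  case 0
  then show ?case by auto
next
  case (Suc M)
  define q where "q = card (UNIV :: 'a set)"
  have q1: "q \<ge> 1" unfolding q_def by (simp add: Suc_le_eq card_gt_0_iff)
  from Suc obtain w where wV: "\<forall>m<M. w m \<in> V0 I" and
    wP: "\<forall>U\<in>UU. \<forall>c. (\<lambda>z. \<Sum>m<M. c m * w m z) \<in> U \<longrightarrow> (\<forall>m<M. c m = 0)" by auto
  define F where "F = (\<lambda>(u::'i\<Rightarrow>'a, d::nat \<Rightarrow> 'a). \<lambda>z. u z + (\<Sum>i<M. d i * w i z))"
  define Bad where "Bad = (\<Union>U\<in>UU. F ` (U \<times> ({..<M} \<rightarrow>\<^sub>E (UNIV::'a set))))"
  have "card Bad \<le> (\<Sum>U\<in>UU. card (F ` (U \<times> ({..<M} \<rightarrow>\<^sub>E (UNIV::'a set)))))"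
    unfolding Bad_def by (rule card_UN_le[OF finU])
  also have "\<dots> \<le> (\<Sum>U\<in>UU. q ^ T * q ^ M)"
  proof (rule sum_mono)
    fix U assume "U \<in> UU"
    have "card (F ` (U \<times> ({..<M} \<rightarrow>\<^sub>E (UNIV::'a set)))) \<le> card (U \<times> ({..<M} \<rightarrow>\<^sub>E (UNIV::'a set)))"
      by (rule card_image_le) (simp add: finite_PiE Uf[OF \<open>U \<in> UU\<close>])
    also have "\<dots> = card U * q ^ M" by (simp add: card_cartesian_product card_funcsetE q_def)
    also have "\<dots> \<le> q ^ T * q ^ M" using Ub[OF \<open>U \<in> UU\<close>] by (simp add: q_def)
    finally show "card (F ` (U \<times> ({..<M} \<rightarrow>\<^sub>E (UNIV::'a set)))) \<le> q ^ T * q ^ M" .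
  qed
  also have "\<dots> = card UU * q ^ (T + M)" by (simp add: power_add)
  also have "\<dots> \<le> card UU * q ^ (card I - 1)"
    using Suc.prems q1 by (intro mult_le_mono2 power_increasing) auto
  also have "\<dots> < q * q ^ (card I - 1)"
    using cU Suc.prems q1 by (simp add: q_def)
  also have "\<dots> = q ^ card I" using Suc.prems by (cases "card I") auto
  finally have "card Bad < card (V0 I :: ('i \<Rightarrow> 'a) set)" using card_V0[OF fin, where 'a='a] by (simp add: q_def)
  moreover have finBad: "finite Bad" unfolding Bad_def using finU Uf
    by (auto intro!: finite_imageI simp: finite_PiE)
  ultimately have "\<not> V0 I \<subseteq> Bad" using card_mono[OF finBad] by (meson not_le)
  then obtain w' where w'V: "w' \<in> V0 I" and w'B: "w' \<notin> Bad" by auto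
  define w2 where "w2 = w(M := w')"
  show ?case
  proof (intro exI[of _ w2] conjI allI ballI impI)
    fix m assume "m < Suc M" thus "w2 m \<in> V0 I" using wV w'V by (auto simp: w2_def less_Suc_eq)
  next
    fix U c m assume U: "U \<in> UU" and S: "(\<lambda>z. \<Sum>m<Suc M. c m * w2 m z) \<in> U" and m: "m < Suc M"
    have eq: "(\<lambda>z. \<Sum>m<Suc M. c m * w2 m z) = (\<lambda>z. (\<Sum>m<M. c m * w m z) + c M * w' z)"
      by (auto simp: w2_def fun_eq_iff intro!: sum.cong)
    have cM: "c M = 0"
    proof (rule ccontr)
      assume nz: "c M \<noteq> 0"
      define u where "u = (\<lambda>z. inverse (c M) * ((\<Sum>m<M. c m * w m z) + c M * w' z))"
      have uU: "u \<in> U" unfolding u_def using Us[OF U, of _ "inverse (c M)"] S eq by metis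
      define d where "d = restrict (\<lambda>i. - c i / c M) {..<M}"
      have dP: "d \<in> {..<M} \<rightarrow>\<^sub>E (UNIV::'a set)" by (simp add: d_def)
      have "F (u, d) = w'"
      proof
        fix z
        have "(\<Sum>i<M. d i * w i z) = (\<Sum>i<M. - (c i * w i z) / c M)"
          by (auto simp: d_def intro!: sum.cong)
        also have "\<dots> = - (\<Sum>i<M. c i * w i z) / c M"
          by (simp add: sum_divide_distrib sum_negf)
        finally show "F (u, d) z = w' z" using nz
          by (simp add: F_def u_def field_simps)
      qed
      hence "w' \<in> Bad" unfolding Bad_def using uU dP U by force
      thus False using w'B by simp
    qed
    have "(\<lambda>z. \<Sum>m<M. c m * w m z) \<in> U" using S eq cM by simp
    hence "\<forall>m<M. c m = 0" using wP U by blast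
    thus "c m = 0" using cM m by (auto simp: less_Suc_eq)
  qed
qed

definition sy :: "nat set \<Rightarrow> nat \<Rightarrow> (nat \<Rightarrow> 'a::field) \<Rightarrow> 'a" where
  "sy B i d = (if i = Max B then (\<Sum>s\<in>B-{i}. d s) else d i)"

definition symb :: "nat set list \<Rightarrow> nat \<Rightarrow> nat \<Rightarrow> (nat \<times> nat \<Rightarrow> 'a::field) \<Rightarrow> 'a" where
  "symb Bs b i v = sy (Bs!b) i (\<lambda>s. v (b,s))"

definition Iset :: "nat set list \<Rightarrow> (nat \<times> nat) set" where
  "Iset Bs = (SIGMA b:{..<length Bs}. Bs!b - {Max (Bs!b)})"

definition Uset :: "nat set list \<Rightarrow> nat set \<Rightarrow> (nat \<times> nat \<Rightarrow> 'a::field) set" where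
  "Uset Bs A = {v\<in>V0 (Iset Bs). \<forall>b<length Bs. \<forall>i\<in>Bs!b - A. symb Bs b i v = 0}"

lemma sy_diff: "sy B i (\<lambda>s. d s - e s) = sy B i d - sy B i e"
  by (simp add: sy_def sum_subtractf)

lemma sy_scale: "sy B i (\<lambda>s. c * d s) = c * sy B i d"
  by (simp add: sy_def sum_distrib_left)

lemma sy_lin: "sy B i (\<lambda>s. \<Sum>m<M. x m * w m s) = (\<Sum>m<M. sy B i (w m) * x m)"
proof (cases "i = Max B")
  case True
  have "(\<Sum>s\<in>B-{i}. \<Sum>m<M. x m * w m s) = (\<Sum>m<M. \<Sum>s\<in>B-{i}. x m * w m s)"
    by (rule sum.swap)
  also have "\<dots> = (\<Sum>m<M. (\<Sum>s\<in>B-{i}. w m s) * x m)"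
    by (intro sum.cong refl) (simp add: sum_distrib_left mult.commute)
  finally show ?thesis using True by (simp add: sy_def)
next
  case False thus ?thesis by (simp add: sy_def mult.commute)
qed

lemma local_zero:
  fixes d :: "nat \<Rightarrow> 'a::field"
  assumes fB: "finite B" and s: "s \<in> B" "s \<noteq> Max B"
    and h1: "\<And>i. i \<in> B - A \<Longrightarrow> sy B i d = 0"
    and h2: "\<And>s'. s' \<in> B \<inter> A - {Max (B \<inter> A)} \<Longrightarrow> d s' = 0"
  shows "d s = 0"
proof -
  have z: "d s' = 0" if "s' \<in> B" "s' \<noteq> Max B" "s' \<noteq> Max (B \<inter> A)" for s'
  proof (cases "s' \<in> A")
    case True thus ?thesis using h2 that by auto
  next
    case False thus ?thesis using h1[of s'] that by (auto simp: sy_def)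
  qed
  show ?thesis
  proof (cases "s \<in> A \<and> s = Max (B \<inter> A)")
    case False thus ?thesis
    proof (cases "s \<in> A")
      case True thus ?thesis using False h2[of s] s by blast
    next
      case False thus ?thesis using h1[of s] s by (simp add: sy_def)
    qed
  next
    case True
    hence sA: "s \<in> A" and True: "s = Max (B \<inter> A)" by auto
    have mB: "Max B \<in> B" using fB s by (intro Max_in) auto
    have mA: "Max B \<notin> A"
    proof
      assume "Max B \<in> A"
      hence "Max B \<le> Max (B \<inter> A)" using fB mB by (intro Max_ge) auto
      moreover have "s \<le> Max B" by (rule Max_ge[OF fB s(1)])
      ultimately show False using True s by simp
    qed
    have "0 = sy B (Max B) d" using h1[of "Max B"] mB mA by auto
    also have "\<dots> = (\<Sum>s'\<in>B - {Max B}. d s')" by (simp add: sy_def)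
    also have "\<dots> = d s + (\<Sum>s'\<in>B - {Max B} - {s}. d s')"
      using s fB by (subst sum.remove[of _ s]) auto
    also have "(\<Sum>s'\<in>B - {Max B} - {s}. d s') = 0"
      using z True by (intro sum.neutral) auto
    finally show ?thesis by simp
  qed
qed

lemma local_repair:
  fixes d :: "nat \<Rightarrow> 'a::field"
  assumes fB: "finite B" and j: "j \<in> B"
    and h: "\<And>i. i \<in> B - {j} \<Longrightarrow> sy B i d = 0"
  shows "sy B j d = 0"
proof (cases "j = Max B")
  case True
  have "(\<Sum>s\<in>B-{j}. d s) = (\<Sum>s\<in>B-{j}. sy B s d)"
    using True by (auto simp: sy_def intro!: sum.cong)
  also have "\<dots> = 0" using h by simp
  finally show ?thesis using True by (simp add: sy_def)
next
  case False
  have mB: "Max B \<in> B" using fB j by (intro Max_in) auto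
  have "0 = sy B (Max B) d" using h[of "Max B"] mB False by auto
  also have "\<dots> = (\<Sum>s\<in>B - {Max B}. d s)" by (simp add: sy_def)
  also have "\<dots> = d j + (\<Sum>s\<in>B - {Max B} - {j}. d s)"
    using j False fB by (subst sum.remove[of _ j]) auto
  also have "(\<Sum>s\<in>B - {Max B} - {j}. d s) = 0"
  proof (intro sum.neutral ballI)
    fix s assume s: "s \<in> B - {Max B} - {j}"
    hence "sy B s d = 0" using h by auto
    thus "d s = 0" using s by (simp add: sy_def)
  qed
  finally show ?thesis using False by (simp add: sy_def)
qed

lemma card_Diff_Max: "finite X \<Longrightarrow> card (X - {Max X}) = card X - 1"
  by (cases "X = {}") (auto simp: card_Diff_singleton)

lemma U_card:
  assumes fB: "\<And>b. b < length Bs \<Longrightarrow> finite (Bs!b)"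
  shows "card (Uset Bs A :: (nat \<times> nat \<Rightarrow> 'a::{finite,field}) set)
           \<le> card (UNIV::'a set) ^ (\<Sum>b<length Bs. card (Bs!b \<inter> A) - 1)"
proof -
  define N where "N = length Bs"
  define Fb where "Fb b = Bs!b \<inter> A - {Max (Bs!b \<inter> A)}" for b
  define J where "J = (SIGMA b:{..<N}. Fb b)"
  have fJ: "finite J" unfolding J_def Fb_def using fB N_def by auto
  have cJ: "card J = (\<Sum>b<length Bs. card (Bs!b \<inter> A) - 1)"
    unfolding J_def Fb_def N_def using fB by (auto intro!: sum.cong simp: card_Diff_Max)
  define \<pi> where "\<pi> v = (\<lambda>z. if z \<in> J then v z else (0::'a))" for v :: "nat \<times> nat \<Rightarrow> 'a"
  have inj: "inj_on \<pi> (Uset Bs A)"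
  proof (rule inj_onI)
    fix u u' assume u: "u \<in> Uset Bs A" and u': "u' \<in> Uset Bs A" and eq: "\<pi> u = \<pi> u'"
    show "u = u'"
    proof
      fix z
      obtain b s :: nat where z: "z = (b,s)" by (cases z)
      show "u z = u' z"
      proof (cases "z \<in> Iset Bs")
        case False thus ?thesis using u u' z by (auto simp: Uset_def V0_def)
      next
        case True
        hence b: "b < N" and s: "s \<in> Bs!b" "s \<noteq> Max (Bs!b)" using z by (auto simp: Iset_def N_def)
        define d where "d s' = u (b,s') - u' (b,s')" for s'
        have "d s = 0"
        proof (rule local_zero[OF fB[OF b[unfolded N_def]] s, of A])
          fix i assume i: "i \<in> Bs!b - A"
          have "sy (Bs!b) i d = symb Bs b i u - symb Bs b i u'"
            unfolding d_def symb_def by (rule sy_diff)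
          also have "\<dots> = 0" using u u' i b by (auto simp: Uset_def N_def)
          finally show "sy (Bs!b) i d = 0" .
        next
          fix s' assume "s' \<in> Bs!b \<inter> A - {Max (Bs!b \<inter> A)}"
          hence "(b,s') \<in> J" using b by (auto simp: J_def Fb_def)
          thus "d s' = 0" using fun_cong[OF eq, of "(b,s')"] by (simp add: \<pi>_def d_def)
        qed
        thus ?thesis by (simp add: d_def z)
      qed
    qed
  qed
  have sub: "\<pi> ` Uset Bs A \<subseteq> V0 J" by (auto simp: \<pi>_def V0_def)
  have "card (V0 J :: (nat \<times> nat \<Rightarrow> 'a) set) = card (UNIV::'a set) ^ card J" by (rule card_V0[OF fJ])
  moreover hence "finite (V0 J :: (nat \<times> nat \<Rightarrow> 'a) set)"
    by (metis card_gt_0_iff finite_UNIV zero_less_power card_0_eq UNIV_not_empty)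
  ultimately have "card (\<pi> ` Uset Bs A) \<le> card (UNIV::'a set) ^ card J"
    using card_mono[OF _ sub] by metis
  thus ?thesis using card_image[OF inj] cJ by simp
qed

lemma swap_count:
  assumes "finite X" "finite Y"
  shows "(\<Sum>b\<in>X. card {y\<in>Y. P b y}) = (\<Sum>y\<in>Y. card {b\<in>X. P b y})"
proof -
  have "(\<Sum>b\<in>X. card {y\<in>Y. P b y}) = (\<Sum>b\<in>X. \<Sum>y\<in>Y. if P b y then 1 else 0)"
    using assms by (simp add: sum.inter_filter[symmetric])
  also have "\<dots> = (\<Sum>y\<in>Y. \<Sum>b\<in>X. if P b y then 1 else 0)" by (rule sum.swap)
  also have "\<dots> = (\<Sum>y\<in>Y. card {b\<in>X. P b y})"
    using assms by (simp add: sum.inter_filter[symmetric])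
  finally show ?thesis .
qed

lemma rep_count:
  assumes bibd: "bibd lam r n Bs" and i: "i \<in> {1..n}"
  shows "card {b. b < length Bs \<and> i \<in> Bs!b} * (r - 1) = lam * (n - 1)"
proof -
  define X where "X = {b. b < length Bs \<and> i \<in> Bs!b}"
  define Y where "Y = {1..n} - {i}"
  have hB: "\<And>b. b < length Bs \<Longrightarrow> Bs!b \<subseteq> {1..n} \<and> card (Bs!b) = r"
    using bibd nth_mem unfolding bibd_def by blast
  have fX: "finite X" unfolding X_def by simp
  have fY: "finite Y" unfolding Y_def by simp
  have "(\<Sum>b\<in>X. card {y\<in>Y. y \<in> Bs!b}) = (\<Sum>b\<in>X. r - 1)"
  proof (rule sum.cong[OF refl])
    fix b assume b: "b \<in> X"
    have "{y\<in>Y. y \<in> Bs!b} = Bs!b - {i}" using hB[of b] b by (auto simp: X_def Y_def)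
    moreover have "finite (Bs!b)" using hB[of b] b by (auto simp: X_def intro: finite_subset)
    ultimately show "card {y\<in>Y. y \<in> Bs!b} = r - 1" using hB[of b] b by (simp add: X_def)
  qed
  moreover have "(\<Sum>y\<in>Y. card {b\<in>X. y \<in> Bs!b}) = (\<Sum>y\<in>Y. lam)"
  proof (rule sum.cong[OF refl])
    fix y assume y: "y \<in> Y"
    have "card {b\<in>X. y \<in> Bs!b} = length (filter (\<lambda>B. i \<in> B \<and> y \<in> B) Bs)"
      unfolding length_filter_conv_card X_def by (rule arg_cong[where f=card]) auto
    also have "\<dots> = lam" using bibd i y unfolding bibd_def Y_def by auto
    finally show "card {b\<in>X. y \<in> Bs!b} = lam" .
  qed
  ultimately have "card X * (r - 1) = card Y * lam"
    using swap_count[OF fX fY, of "\<lambda>b y. y \<in> Bs!b"] by simp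
  moreover have "card Y = n - 1" using i by (simp add: Y_def)
  ultimately show ?thesis by (simp add: X_def mult.commute)
qed

lemma sum_delta_mult: "finite A \<Longrightarrow> a \<in> A \<Longrightarrow> (\<Sum>t\<in>A. (if t = a then 1 else 0) * (f t::'a::field)) = f a"
proof -
  assume "finite A" "a \<in> A"
  have "(\<Sum>t\<in>A. (if t = a then 1 else 0) * f t) = (\<Sum>t\<in>A. if t = a then f t else 0)"
    by (rule sum.cong) auto
  thus ?thesis using \<open>finite A\<close> \<open>a \<in> A\<close> by (simp add: sum.delta)
qed

theorem mainTheorem3:
  fixes n r lam k :: nat and Bs :: "nat set list"
  assumes "n \<ge> 2" and "2 \<le> r" and "r \<le> n" and "lam \<ge> 1"
    and "1 \<le> k" and "k \<le> n - 1"
    and "bibd lam r n Bs"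
    and "real (card (UNIV :: 'a::{finite,field} set)) >
           real (n choose k) * real (T_max n k Bs)
             * (real (lam * n * (n - 1)) / real r - real (T_max n k Bs))"
  shows "\<exists>(\<alpha>::nat) (M::nat) (G :: nat \<Rightarrow> nat \<Rightarrow> nat \<Rightarrow> 'a).
           real \<alpha> = real (lam * (n - 1)) / real (r - 1) \<and>
           real M = real (lam * n * (n - 1)) / real r - real (T_max n k Bs) \<and>
           lin_regen_code n k (n - 1) \<alpha> lam M G \<and>
           uncoded_repair n \<alpha> lam M G"
proof -
  note bibd = assms(7)
  define N where "N = length Bs"
  define q where "q = card (UNIV :: 'a set)"
  have hB: "\<And>b. b < N \<Longrightarrow> Bs!b \<subseteq> {1..n} \<and> card (Bs!b) = r"
    using bibd nth_mem unfolding bibd_def N_def by blast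
  have fB: "\<And>b. b < N \<Longrightarrow> finite (Bs!b)" using hB by (meson finite_atLeastAtMost finite_subset)
  have neB: "\<And>b. b < N \<Longrightarrow> Bs!b \<noteq> {}" using hB assms(2) by fastforce
  define \<alpha> where "\<alpha> = lam * (n - 1) div (r - 1)"
  define Bi where "Bi i = {b. b < N \<and> i \<in> Bs!b}" for i
  have rep: "card (Bi i) = \<alpha>" if "i \<in> {1..n}" for i
  proof -
    have "r - 1 > 0" using assms(2) by simp
    thus ?thesis using rep_count[OF bibd that] unfolding \<alpha>_def Bi_def N_def
      by (metis div_mult_self_is_m)
  qed
  have fBi: "finite (Bi i)" for i by (simp add: Bi_def)
  have one: "1 \<in> {1..n}" using assms(1) by simp
  have \<alpha>eq: "\<alpha> * (r - 1) = lam * (n - 1)"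
    using rep_count[OF bibd one] rep[OF one] by (simp add: Bi_def N_def)
  have Nr: "N * r = n * \<alpha>"
  proof -
    have "(\<Sum>b\<in>{..<N}. card {y\<in>{1..n}. y \<in> Bs!b}) = (\<Sum>y\<in>{1..n}. card {b\<in>{..<N}. y \<in> Bs!b})"
      by (rule swap_count) auto
    moreover have "(\<Sum>b\<in>{..<N}. card {y\<in>{1..n}. y \<in> Bs!b}) = (\<Sum>b\<in>{..<N}. r)"
    proof (rule sum.cong[OF refl])
      fix b assume "b \<in> {..<N}"
      hence "{y\<in>{1..n}. y \<in> Bs!b} = Bs!b" using hB[of b] by auto
      thus "card {y\<in>{1..n}. y \<in> Bs!b} = r" using hB[of b] \<open>b \<in> {..<N}\<close> by simp
    qed
    moreover have "(\<Sum>y\<in>{1..n}. card {b\<in>{..<N}. y \<in> Bs!b}) = (\<Sum>y\<in>{1..n}. \<alpha>)"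
    proof (rule sum.cong[OF refl])
      fix y assume y: "y \<in> {1..n}"
      have "{b\<in>{..<N}. y \<in> Bs!b} = Bi y" by (auto simp: Bi_def)
      thus "card {b\<in>{..<N}. y \<in> Bs!b} = \<alpha>" using rep[OF y] by simp
    qed
    ultimately show ?thesis by (simp add: mult.commute)
  qed
  define D where "D = N * (r - 1)"
  have Dr: "D * r = lam * n * (n - 1)"
  proof -
    have "D * r = (N * r) * (r - 1)" by (simp add: D_def)
    also have "\<dots> = n * (\<alpha> * (r - 1))" using Nr by simp
    finally show ?thesis using \<alpha>eq by simp
  qed
  have cI: "card (Iset Bs) = D"
  proof -
    have "card (Iset Bs) = (\<Sum>b<N. card (Bs!b - {Max (Bs!b)}))"
      unfolding Iset_def N_def using fB N_def by (subst card_SigmaI) auto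
    also have "\<dots> = (\<Sum>b<N. r - 1)" using hB fB by (auto simp: card_Diff_Max intro!: sum.cong)
    finally show ?thesis by (simp add: D_def)
  qed
  have fI: "finite (Iset Bs)" unfolding Iset_def using fB N_def by auto
  have Tof: "T_of Bs A = (\<Sum>b<N. card (Bs!b \<inter> A) - 1)" for A
  proof -
    have "T_of Bs A = sum_list (map (\<lambda>B. card (B \<inter> A) - 1) Bs)"
      unfolding T_of_def sum_list_map_filter' by (rule arg_cong[where f=sum_list]) auto
    also have "\<dots> = (\<Sum>b<N. card (Bs!b \<inter> A) - 1)"
      by (simp add: sum_list_sum_nth atLeast0LessThan N_def)
    finally show ?thesis .
  qed
  have TofD: "T_of Bs A \<le> D" for A
  proof -
    have "T_of Bs A \<le> (\<Sum>b<N. r - 1)" unfolding Tof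
    proof (rule sum_mono)
      fix b assume "b \<in> {..<N}"
      hence "card (Bs!b \<inter> A) \<le> r" using hB fB by (metis card_mono inf_le1 lessThan_iff)
      thus "card (Bs!b \<inter> A) - 1 \<le> r - 1" by simp
    qed
    thus ?thesis by (simp add: D_def)
  qed
  define Aset where "Aset = {A. A \<subseteq> {1..n} \<and> card A = n - k}"
  have fAset: "finite Aset" unfolding Aset_def by simp
  have cAset: "card Aset = n choose k"
    unfolding Aset_def using n_subsets[of "{1..n}" "n - k"] assms binomial_symmetric[of k n] by simp
  define T where "T = T_max n k Bs"
  have Tdef: "T = Max (T_of Bs ` Aset)" unfolding T_def T_max_def Aset_def
    by (rule arg_cong[where f=Max]) auto
  have neAset: "Aset \<noteq> {}"
  proof -
    have "{1..n-k} \<in> Aset" unfolding Aset_def by auto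
    thus ?thesis by auto
  qed
  have TofT: "T_of Bs A \<le> T" if "A \<in> Aset" for A
    unfolding Tdef using fAset that by auto
  have TD: "T \<le> D" unfolding Tdef using fAset neAset TofD by auto
  define M where "M = D - T"
  have realD: "real D = real (lam * n * (n - 1)) / real r"
    using Dr assms(2) by (simp add: field_simps flip: of_nat_mult)
  have realM: "real M = real (lam * n * (n - 1)) / real r - real T"
    using realD TD by (simp add: M_def of_nat_diff)
  have real\<alpha>: "real \<alpha> = real (lam * (n - 1)) / real (r - 1)"
  proof -
    have h: "real (lam*(n-1)) = real \<alpha> * real (r-1)" using \<alpha>eq by (metis of_nat_mult)
    have nz: "real (r-1) \<noteq> 0" using assms(2) by simp
    show ?thesis by (simp only: h nonzero_mult_div_cancel_right[OF nz])
  qed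
  have q2: "q \<ge> 2"
  proof -
    have "card {0::'a, 1} \<le> q" unfolding q_def by (rule card_mono) auto
    thus ?thesis by simp
  qed
  define vec where "vec c w = (\<lambda>z. \<Sum>m<M. c m * w m z)" for c :: "nat \<Rightarrow> 'a" and w :: "nat \<Rightarrow> nat \<times> nat \<Rightarrow> 'a"
  have Uscale: "(\<lambda>z. c * u z) \<in> Uset Bs A" if "u \<in> Uset Bs A" for u c A
    using that by (auto simp: Uset_def V0_def symb_def sy_scale)
  have Uzero: "(\<lambda>z. 0) \<in> Uset Bs A" for A
    by (auto simp: Uset_def V0_def symb_def sy_def)
  have fV0: "finite (V0 (Iset Bs) :: (nat \<times> nat \<Rightarrow> 'a) set)"
  proof -
    have "card (V0 (Iset Bs) :: (nat \<times> nat \<Rightarrow> 'a) set) = q ^ card (Iset Bs)"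
      unfolding q_def by (rule card_V0[OF fI])
    moreover have "q ^ card (Iset Bs) > 0" using q2 by simp
    ultimately show ?thesis by (metis card.infinite less_irrefl)
  qed
  have Ufin: "finite (Uset Bs A :: (nat \<times> nat \<Rightarrow> 'a) set)" for A
    by (rule finite_subset[OF _ fV0]) (auto simp: Uset_def)
  have Ucard: "card (Uset Bs A :: (nat \<times> nat \<Rightarrow> 'a) set) \<le> q ^ T" if "A \<in> Aset" for A
  proof -
    have "card (Uset Bs A :: (nat \<times> nat \<Rightarrow> 'a) set) \<le> q ^ T_of Bs A"
      using U_card[of Bs A, where 'a='a] fB unfolding Tof q_def N_def by auto
    also have "\<dots> \<le> q ^ T" using q2 TofT[OF that] by (intro power_increasing) auto
    finally show ?thesis .
  qed
  obtain w where wV: "\<forall>m<M. w m \<in> V0 (Iset Bs)"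
    and KP: "\<forall>A\<in>Aset. \<forall>c. vec c w \<in> Uset Bs A \<longrightarrow> (\<forall>m<M. c m = 0)"
  proof -
    consider "M = 0" | "T = 0" | "M > 0" "T > 0" by auto
    thus ?thesis
    proof cases
      case 1 thus ?thesis using that[of "\<lambda>_ _. 0"] by auto
    next
      case 2
      have "\<exists>w. (\<forall>m<M. w m \<in> V0 (Iset Bs)) \<and>
          (\<forall>U\<in>{{\<lambda>z. 0::'a}}. \<forall>c. (\<lambda>z. \<Sum>m<M. c m * w m z) \<in> U \<longrightarrow> (\<forall>m<M. c m = 0))"
        by (rule greedy[where T=0]) (use fI q2 cI 2 in \<open>auto simp: M_def q_def\<close>)
      then obtain w where w1: "\<forall>m<M. w m \<in> V0 (Iset Bs)" and
        w2: "\<forall>U\<in>{{\<lambda>z. 0::'a}}. \<forall>c. (\<lambda>z. \<Sum>m<M. c m * w m z) \<in> U \<longrightarrow> (\<forall>m<M. c m = 0)" by blast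
      show ?thesis
      proof (rule that[OF w1], intro ballI allI impI)
        fix A c m assume A: "A \<in> Aset" and v: "vec c w \<in> Uset Bs A" and m: "m < M"
        have "card (Uset Bs A :: (nat \<times> nat \<Rightarrow> 'a) set) \<le> Suc 0" using Ucard[OF A] 2 by simp
        hence "vec c w = (\<lambda>z. 0)" using card_le_Suc0_iff_eq[OF Ufin] v Uzero by blast
        thus "c m = 0" using w2 m unfolding vec_def by blast
      qed
    next
      case 3
      define UU where "UU = (Uset Bs ` Aset :: (nat \<times> nat \<Rightarrow> 'a) set set)"
      have "real q > real (n choose k) * real T * real M" using assms(8) realM by (simp add: q_def T_def)
      hence "q > (n choose k) * T * M" by (metis of_nat_less_iff of_nat_mult)
      moreover have "(n choose k) * T * M \<ge> n choose k" using 3 by simp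
      moreover have "card UU \<le> n choose k" unfolding UU_def using card_image_le[OF fAset] cAset by simp
      ultimately have cUU: "card UU < q" by linarith
      have "\<exists>w. (\<forall>m<M. w m \<in> V0 (Iset Bs)) \<and>
          (\<forall>U\<in>UU. \<forall>c. (\<lambda>z. \<Sum>m<M. c m * w m z) \<in> U \<longrightarrow> (\<forall>m<M. c m = 0))"
      proof (rule greedy[where T=T])
        show "finite UU" using fAset by (simp add: UU_def)
      qed (use fI cUU cI TD Ucard Ufin Uscale in \<open>auto simp: M_def q_def UU_def\<close>)
      thus ?thesis using that by (auto simp: UU_def vec_def)
    qed
  qed
  define blk where "blk i = (SOME h. bij_betw h {..<\<alpha>} (Bi i))" for i
  have blk: "bij_betw (blk i) {..<\<alpha>} (Bi i)" if "i \<in> {1..n}" for i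
  proof -
    obtain h where "bij_betw h {0..<card (Bi i)} (Bi i)" using ex_bij_betw_nat_finite[OF fBi] by blast
    hence "bij_betw h {..<\<alpha>} (Bi i)" using rep[OF that] by (simp add: atLeast0LessThan)
    thus ?thesis unfolding blk_def by (rule someI[where P="\<lambda>h. bij_betw h {..<\<alpha>} (Bi i)"])
  qed
  have blk_in: "blk i t \<in> Bi i" if "i \<in> {1..n}" "t < \<alpha>" for i t
    using blk[OF that(1)] that(2) by (auto dest: bij_betwE)
  have blk_surj: "\<exists>t<\<alpha>. blk i t = b" if "i \<in> {1..n}" "b \<in> Bi i" for i b
  proof -
    have "b \<in> blk i ` {..<\<alpha>}" using blk[OF that(1)] that(2) by (simp add: bij_betw_def)
    thus ?thesis by auto
  qed
  define G where "G i t m = symb Bs (blk i t) i (w m)" for i t m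
  have cont: "content M G i x t = symb Bs (blk i t) i (vec x w)" for i x t
    unfolding content_def G_def symb_def vec_def
    using sy_lin[where B="Bs ! blk i t" and i=i and M=M and x=x and w="\<lambda>m s. w m (blk i t, s)"] by simp
  have cdiff: "content M G i x t - content M G i y t = content M G i (\<lambda>m. x m - y m) t" for i x y t
    unfolding content_def by (simp add: sum_subtractf right_diff_distrib)
  have vecV: "vec c w \<in> V0 (Iset Bs)" for c
    using wV by (auto simp: vec_def V0_def)
  define S where "S j i = {t. t < \<alpha> \<and> blk i t \<in> Bi j}" for j i
  have Scard: "S j i \<subseteq> {..<\<alpha>} \<and> card (S j i) = lam"
    if j: "j \<in> {1..n}" and i: "i \<in> {1..n} - {j}" for i j
  proof
    show "S j i \<subseteq> {..<\<alpha>}" by (auto simp: S_def)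
    have i1: "i \<in> {1..n}" using i by simp
    have inj: "inj_on (blk i) (S j i)"
      using blk[OF i1] by (rule bij_betw_imp_inj_on[THEN inj_on_subset]) (auto simp: S_def)
    have img: "blk i ` S j i = Bi i \<inter> Bi j"
    proof
      show "blk i ` S j i \<subseteq> Bi i \<inter> Bi j" using blk_in[OF i1] by (auto simp: S_def)
      show "Bi i \<inter> Bi j \<subseteq> blk i ` S j i"
      proof
        fix b assume b: "b \<in> Bi i \<inter> Bi j"
        then obtain t where "t < \<alpha>" "blk i t = b" using blk_surj[OF i1] by blast
        thus "b \<in> blk i ` S j i" using b by (auto simp: S_def)
      qed
    qed
    have "card (S j i) = card (Bi i \<inter> Bi j)" using card_image[OF inj] img by simp
    also have "\<dots> = length (filter (\<lambda>B. i \<in> B \<and> j \<in> B) Bs)"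
      unfolding length_filter_conv_card Bi_def N_def by (rule arg_cong[where f=card]) auto
    also have "\<dots> = lam" using bibd i j unfolding bibd_def by auto
    finally show "card (S j i) = lam" .
  qed
  have R: "\<forall>t<\<alpha>. content M G j x t = content M G j y t"
    if j: "j \<in> {1..n}" and agr: "\<forall>i\<in>{1..n}-{j}. \<forall>t\<in>S j i. content M G i x t = content M G i y t"
    for j x y
  proof (intro allI impI)
    fix t assume t: "t < \<alpha>"
    define \<delta> where "\<delta> = (\<lambda>m. x m - y m)"
    define b where "b = blk j t"
    have b: "b < N" "j \<in> Bs!b" using blk_in[OF j t] by (auto simp: b_def Bi_def)
    have "sy (Bs!b) j (\<lambda>s. vec \<delta> w (b,s)) = 0"
    proof (rule local_repair[OF fB[OF b(1)] b(2)])
      fix i assume i: "i \<in> Bs!b - {j}"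
      hence i1: "i \<in> {1..n}" using hB[OF b(1)] by auto
      have "b \<in> Bi i" using i b by (auto simp: Bi_def)
      then obtain t' where t': "t' < \<alpha>" "blk i t' = b" using blk_surj[OF i1] by blast
      have "t' \<in> S j i" using t' b by (auto simp: S_def Bi_def)
      hence "content M G i \<delta> t' = 0" using agr i i1 cdiff[of i x t' y] by (auto simp: \<delta>_def)
      thus "sy (Bs!b) i (\<lambda>s. vec \<delta> w (b,s)) = 0" using cont[of i \<delta> t'] t' by (simp add: symb_def)
    qed
    hence "content M G j \<delta> t = 0" using cont[of j \<delta> t] by (simp add: symb_def b_def)
    thus "content M G j x t = content M G j y t" using cdiff[of j x t y] by (simp add: \<delta>_def)
  qed
  have UR: "uncoded_repair n \<alpha> lam M G"
    unfolding uncoded_repair_def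
  proof (intro ballI)
    fix j assume j: "j \<in> {1..n}"
    show "\<exists>S. (\<forall>i\<in>{1..n} - {j}. S i \<subseteq> {..<\<alpha>} \<and> card (S i) = lam) \<and>
        (\<forall>x y. (\<forall>i\<in>{1..n} - {j}. \<forall>t\<in>S i. content M G i x t = content M G i y t) \<longrightarrow>
               (\<forall>t<\<alpha>. content M G j x t = content M G j y t))"
      using Scard[OF j] R[OF j] by blast
  qed
  have LR: "lin_regen_code n k (n - 1) \<alpha> lam M G"
    unfolding lin_regen_code_def
  proof (intro conjI allI impI ballI)
    fix K x y m
    assume K: "K \<subseteq> {1..n} \<and> card K = k"
      and agr: "\<forall>i\<in>K. \<forall>t<\<alpha>. content M G i x t = content M G i y t" and m: "m < M"
    define \<delta> where "\<delta> = (\<lambda>m. x m - y m)"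
    define A where "A = {1..n} - K"
    have A: "A \<in> Aset" using K by (auto simp: Aset_def A_def card_Diff_subset finite_subset)
    have "vec \<delta> w \<in> Uset Bs A"
      unfolding Uset_def
    proof (intro CollectI conjI vecV allI impI ballI)
      fix b i assume b: "b < length Bs" and i: "i \<in> Bs!b - A"
      have i1: "i \<in> {1..n}" "i \<in> K" using i hB[of b] b by (auto simp: A_def N_def)
      have "b \<in> Bi i" using i b by (auto simp: Bi_def N_def)
      then obtain t where t: "t < \<alpha>" "blk i t = b" using blk_surj[OF i1(1)] by blast
      have "content M G i \<delta> t = 0" using agr i1 t cdiff[of i x t y] by (auto simp: \<delta>_def)
      thus "symb Bs b i (vec \<delta> w) = 0" using cont[of i \<delta> t] t by simp
    qed
    hence "\<delta> m = 0" using KP A m by blast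
    thus "x m = y m" by (simp add: \<delta>_def)
  next
    fix j A' assume j: "j \<in> {1..n}" and A': "A' \<subseteq> {1..n} - {j} \<and> card A' = n - 1"
    have A'eq: "A' = {1..n} - {j}"
      using A' j by (intro card_subset_eq) auto
    define e where "e i = (SOME h. bij_betw h {..<lam} (S j i))" for i
    have e: "bij_betw (e i) {..<lam} (S j i)" if "i \<in> {1..n} - {j}" for i
    proof -
      have fS: "finite (S j i)" by (simp add: S_def)
      obtain h where "bij_betw h {0..<card (S j i)} (S j i)" using ex_bij_betw_nat_finite[OF fS] by blast
      hence "bij_betw h {..<lam} (S j i)" using Scard[OF j that] by (simp add: atLeast0LessThan)
      thus ?thesis unfolding e_def by (rule someI[where P="\<lambda>h. bij_betw h {..<lam} (S j i)"])
    qed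
    define H where "H i l t = (if t = e i l then 1 else (0::'a))" for i l t
    show "\<exists>H :: nat \<Rightarrow> nat \<Rightarrow> nat \<Rightarrow> 'a.
          \<forall>x y. (\<forall>i\<in>A'. \<forall>l<lam. (\<Sum>t<\<alpha>. H i l t * content M G i x t) = (\<Sum>t<\<alpha>. H i l t * content M G i y t))
               \<longrightarrow> (\<forall>t<\<alpha>. content M G j x t = content M G j y t)"
    proof (intro exI[of _ H] allI impI)
      fix x y t0
      assume h: "\<forall>i\<in>A'. \<forall>l<lam. (\<Sum>t<\<alpha>. H i l t * content M G i x t) = (\<Sum>t<\<alpha>. H i l t * content M G i y t)"
        and t0: "t0 < \<alpha>"
      have "\<forall>i\<in>{1..n}-{j}. \<forall>t\<in>S j i. content M G i x t = content M G i y t"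
      proof (intro ballI)
        fix i t assume i: "i \<in> {1..n}-{j}" and t: "t \<in> S j i"
        have "t \<in> e i ` {..<lam}" using e[OF i] t by (simp add: bij_betw_def)
        then obtain l where l: "l < lam" "t = e i l" by auto
        have t\<alpha>: "t < \<alpha>" using t by (simp add: S_def)
        have "(\<Sum>t<\<alpha>. H i l t * content M G i x t) = content M G i x t"
          unfolding H_def l(2) by (rule sum_delta_mult) (use t\<alpha> l in auto)
        moreover have "(\<Sum>t<\<alpha>. H i l t * content M G i y t) = content M G i y t"
          unfolding H_def l(2) by (rule sum_delta_mult) (use t\<alpha> l in auto)
        ultimately show "content M G i x t = content M G i y t" using h i l A'eq by metis
      qed
      thus "content M G j x t0 = content M G j y t0" using R[OF j] t0 by blast
    qed
  qed
  show ?thesis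
    using real\<alpha> realM LR UR by (auto simp: T_def)
qed
end
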